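(* Let $G=(V,E,\{w_j\})$ be a reduced instance of the line highway problem with $[s,\ell]$-valuation (with $s\ge 1$), and let $r=s/\ell$. Let $\boldsymbol{\sigma}$ be the (random) price vector output by the algorithm Line_Random described in the context. Then \[ \frac{\mathrm{Opt}_{\rm coup}(G)}{\mathbf{E}[\mathrm{Profit}_{\rm coup}(\boldsymbol{\sigma})]}\le \begin{cases} 3/r & 0<r\le 1/2,\\ 6 & 1/2<r\le 1,\end{cases} \] where the expectation is over the random choices of the algorithm.
   Context: For integers $a\le b$, $[a,b]=\{a,a+1,\dots,b\}$. A reduced instance of the line highway problem is $G=(V,E,\{w_j\})$ with $V=[1,n]$ (items) and a finite multiset $E=\{e_1,\dots,e_m\}$ of customers, each $e_j=[j_s,j_t]$ with $1\le j_s\le j_t\le n$, having valuation (weight) $w_j>0$; valuations are integers. It has $[s,\ell]$-valuation if $s=\min_j w_j$ and $\ell=\max_j w_j$. For a price vector $\mathbf p=(p_1,\dots,p_n)\in\mathbb R^n$ (prices may be negative), let $p(e_j)=\sum_{i\in e_j}p_i$. The coupon-model profit is $\mathrm{Profit}_{\rm coup}(\mathbf p)=\sum_{j:\,w_j\ge p(e_j)}\max\{p(e_j),0\}$, and $\mathrm{Opt}_{\rm coup}(G)=\max_{\mathbf p}\mathrm{Profit}_{\rm coup}(\mathbf p)$. The DAG representation of $G$ has vertices $u_0,u_1,\dots,u_n$ and, for each $e_j=[j_s,j_t]$, an arc $u_{j_s-1}\to u_{j_t}$ of weight $w_j$; a partial-sum vector $(s_0,\dots,s_n)$ on these vertices determines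 the price vector $p_i=s_i-s_{i-1}$, $i\in[1,n]$. Algorithm Line_Random: construct the DAG representation; for each $u_i$ independently choose a partial sum $s_i$ uniformly at random from the integers $\{0,1,\dots,\ell\}$; output $\sigma_i=s_i-s_{i-1}$ for $i\in[1,n]$. *)

theory Defs
  imports "HOL-Probability.Probability"
begin

(* A customer is a triple (j_s, j_t, w_j): the interval [j_s, j_t] of items and its integer valuation. *)
type_synonym customer = "nat \<times> nat \<times> int"

definition cstart :: "customer \<Rightarrow> nat" where "cstart c = fst c"
definition cend :: "customer \<Rightarrow> nat" where "cend c = fst (snd c)"
definition cweight :: "customer \<Rightarrow> int" where "cweight c = snd (snd c)"

(* reduced instance on items V = [1,n], customers given as a list (a finite multiset) *)
definition reduced_instance :: "nat \<Rightarrow> customer list \<Rightarrow> bool" where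
  "reduced_instance n E \<longleftrightarrow>
     (\<forall>c\<in>set E. 1 \<le> cstart c \<and> cstart c \<le> cend c \<and> cend c \<le> n \<and> cweight c > 0)"

definition has_valuation :: "customer list \<Rightarrow> int \<Rightarrow> int \<Rightarrow> bool" where
  "has_valuation E s l \<longleftrightarrow>
     (\<forall>c\<in>set E. s \<le> cweight c \<and> cweight c \<le> l) \<and>
     (\<exists>c\<in>set E. cweight c = s) \<and> (\<exists>c\<in>set E. cweight c = l)"

definition price_of :: "(nat \<Rightarrow> real) \<Rightarrow> customer \<Rightarrow> real" where
  "price_of p c = (\<Sum>i\<in>{cstart c..cend c}. p i)"

definition profit_coup :: "customer list \<Rightarrow> (nat \<Rightarrow> real) \<Rightarrow> real" where
  "profit_coup E p =
     (\<Sum>c\<leftarrow>E. if real_of_int (cweight c) \<ge> price_of p c then max (price_of p c) 0 else 0)"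

definition opt_coup :: "nat \<Rightarrow> customer list \<Rightarrow> real" where
  "opt_coup n E = (SUP p \<in> {p :: nat \<Rightarrow> real. \<forall>i. i \<notin> {1..n} \<longrightarrow> p i = 0}. profit_coup E p)"

definition partial_sum_dist :: "nat \<Rightarrow> int \<Rightarrow> (nat \<Rightarrow> int) pmf" where
  "partial_sum_dist n l = Pi_pmf {0..n} 0 (\<lambda>_. pmf_of_set {0..l})"

definition prices_of_sums :: "nat \<Rightarrow> (nat \<Rightarrow> int) \<Rightarrow> nat \<Rightarrow> real" where
  "prices_of_sums n s i = (if i \<in> {1..n} then real_of_int (s i - s (i - 1)) else 0)"

definition line_random :: "nat \<Rightarrow> int \<Rightarrow> (nat \<Rightarrow> real) pmf" where
  "line_random n l = map_pmf (prices_of_sums n) (partial_sum_dist n l)"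

definition expected_profit_line_random :: "nat \<Rightarrow> customer list \<Rightarrow> int \<Rightarrow> real" where
  "expected_profit_line_random n E l =
     measure_pmf.expectation (line_random n l) (profit_coup E)"

end

theory Submission
  imports Defs "HOL-Probability.Probability"
begin


definition Tf :: "int \<Rightarrow> int \<Rightarrow> real" where
  "Tf w d = (if real_of_int d \<le> real_of_int w then max (real_of_int d) 0 else 0)"

lemma Tf_nonpos: "d \<le> 0 \<Longrightarrow> Tf w d = 0"
  by (simp add: Tf_def)

lemma col_sum:
  assumes "0 \<le> w"
  shows "(\<Sum>d\<in>{1..int N}. Tf w d) =
    (if int N \<le> w then real N * (real N + 1) / 2 else real_of_int w * (real_of_int w + 1) / 2)"
proof (induction N)
  case 0
  then show ?case using assms by simp
next
  case (Suc N)
  have ins: "{1..int (Suc N)} = insert (int N + 1) {1..int N}" by auto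
  have "(\<Sum>d\<in>{1..int (Suc N)}. Tf w d) = Tf w (int N + 1) + (\<Sum>d\<in>{1..int N}. Tf w d)"
    unfolding ins by (subst sum.insert) auto
  also have "\<dots> = Tf w (int N + 1) + (if int N \<le> w then real N * (real N + 1) / 2 else real_of_int w * (real_of_int w + 1) / 2)"
    using Suc by simp
  finally have eq: "(\<Sum>d\<in>{1..int (Suc N)}. Tf w d) = Tf w (int N + 1) + (if int N \<le> w then real N * (real N + 1) / 2 else real_of_int w * (real_of_int w + 1) / 2)" .
  show ?case
  proof (cases "int N + 1 \<le> w")
    case True
    then have "Tf w (int N + 1) = real N + 1" by (simp add: Tf_def)
    then show ?thesis using eq True by (simp add: field_simps)
  next
    case False
    then have t: "Tf w (int N + 1) = 0" by (simp add: Tf_def)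
    show ?thesis
    proof (cases "int N = w")
      case True
      then have hw: "real_of_int w = real N" by simp
      have "\<not> int (Suc N) \<le> w" using True by simp
      then show ?thesis using eq t True by (simp add: hw)
    next
      case False
      then show ?thesis using eq t \<open>\<not> int N + 1 \<le> w\<close> by simp
    qed
  qed
qed

lemma reindex_col:
  "(\<Sum>x\<in>{0..int m}. f (int m + 1 - x)) = (\<Sum>d\<in>{1..int m + 1}. (f d :: real))"
  by (rule sum.reindex_bij_witness[where i="\<lambda>d. int m + 1 - d" and j="\<lambda>x. int m + 1 - x"]) auto

lemma double_sum:
  assumes "1 \<le> w"
  shows "6 * (\<Sum>x\<in>{0..int m}. \<Sum>y\<in>{0..int m}. Tf w (y - x)) =
    (if int m \<le> w then real m * (real m + 1) * (real m + 2)
     else real_of_int w * (real_of_int w + 1) * (3 * real m + 2 - 2 * real_of_int w))"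
proof (induction m)
  case 0
  then show ?case using assms by (simp add: Tf_def)
next
  case (Suc m)
  define M where "M = int m + 1"
  define A where "A = {0..int m}"
  have ins: "{0..int (Suc m)} = insert M A" unfolding M_def A_def by auto
  have MA: "M \<notin> A" "finite A" unfolding M_def A_def by auto
  have row: "(\<Sum>y\<in>insert M A. Tf w (y - M)) = 0"
    by (rule sum.neutral) (auto simp: Tf_nonpos M_def A_def)
  have colv: "(\<Sum>x\<in>A. Tf w (M - x)) = (\<Sum>d\<in>{1..int (Suc m)}. Tf w d)"
    unfolding M_def A_def using reindex_col[of "Tf w" m] by (simp add: add.commute)
  have "(\<Sum>x\<in>{0..int (Suc m)}. \<Sum>y\<in>{0..int (Suc m)}. Tf w (y - x))
      = (\<Sum>y\<in>insert M A. Tf w (y - M)) + (\<Sum>x\<in>A. Tf w (M - x) + (\<Sum>y\<in>A. Tf w (y - x)))"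
    unfolding ins using MA by (simp add: sum.insert)
  also have "\<dots> = (\<Sum>d\<in>{1..int (Suc m)}. Tf w d) + (\<Sum>x\<in>A. \<Sum>y\<in>A. Tf w (y - x))"
    using row colv by (simp add: sum.distrib)
  finally have eq: "(\<Sum>x\<in>{0..int (Suc m)}. \<Sum>y\<in>{0..int (Suc m)}. Tf w (y - x))
     = (\<Sum>d\<in>{1..int (Suc m)}. Tf w d) + (\<Sum>x\<in>A. \<Sum>y\<in>A. Tf w (y - x))" .
  note IH = Suc[unfolded A_def[symmetric]]
  note C = col_sum[of w "Suc m"]
  show ?case
  proof (cases "int m + 1 \<le> w")
    case True
    then show ?thesis using eq IH C assms by (simp add: field_simps)
  next
    case False
    show ?thesis
    proof (cases "int m = w")
      case True
      then have hw: "real_of_int w = real m" by simp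
      have c: "(\<Sum>d\<in>{1..int (Suc m)}. Tf w d) = real m * (real m + 1) / 2"
        using C False assms by (simp add: hw)
      have x: "6 * (\<Sum>x\<in>A. \<Sum>y\<in>A. Tf w (y - x)) = real m * (real m + 1) * (real m + 2)"
        using IH True by simp
      have "\<not> int (Suc m) \<le> w" using True by simp
      then show ?thesis unfolding eq using c x by (simp add: hw field_simps)
    next
      case F2: False
      then show ?thesis using eq IH C assms False by (simp add: field_simps)
    qed
  qed
qed


lemma pair_dist:
  assumes "finite A" "x \<in> A" "y \<in> A" "x \<noteq> y"
  shows "map_pmf (\<lambda>f. (f x, f y)) (Pi_pmf A d p) = pair_pmf (p x) (p y)"
proof -
  have "map_pmf (\<lambda>f. (f x, f y)) (Pi_pmf A d p) = map_pmf (\<lambda>f. (f x, f y)) (Pi_pmf {x,y} d p)"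
    using assms by (subst Pi_pmf_subset[of A "{x,y}"]) (simp_all add: pmf.map_comp o_def)
  also have "Pi_pmf {x,y} d p = map_pmf (\<lambda>(v,f). f(x:=v)) (pair_pmf (p x) (Pi_pmf {y} d p))"
    using assms by (subst Pi_pmf_insert[symmetric]) auto
  also have "map_pmf (\<lambda>f. (f x, f y)) \<dots> = map_pmf (\<lambda>(a, b). ((\<lambda>v. v) a, (\<lambda>f. f y) b)) (pair_pmf (p x) (Pi_pmf {y} d p))"
    using assms by (simp add: pmf.map_comp o_def case_prod_unfold)
  also have "\<dots> = pair_pmf (p x) (p y)"
    by (subst map_pair) (simp add: Pi_pmf_component)
  finally show ?thesis .
qed

lemma pair_uniform:
  assumes "finite A" "A \<noteq> {}" "finite B" "B \<noteq> {}"
  shows "pair_pmf (pmf_of_set A) (pmf_of_set B) = pmf_of_set (A \<times> B)"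
proof (rule pmf_eqI)
  fix z :: "'a \<times> 'b"
  have ne: "A \<times> B \<noteq> {}" "finite (A \<times> B)" using assms by auto
  obtain a b where z: "z = (a, b)" by (cases z)
  show "pmf (pair_pmf (pmf_of_set A) (pmf_of_set B)) z = pmf (pmf_of_set (A \<times> B)) z"
    unfolding z pmf_pair pmf_of_set[OF assms(2,1)] pmf_of_set[OF assms(4,3)] pmf_of_set[OF ne]
    by (simp add: card_cartesian_product split: split_indicator)
qed

lemma telescope:
  assumes "1 \<le> a" "a \<le> b" "b \<le> n"
  shows "(\<Sum>i\<in>{a..b}. prices_of_sums n s i) = real_of_int (s b - s (a - 1))"
  using assms
proof (induction b)
  case 0
  then show ?case by simp
next
  case (Suc b)
  show ?case
  proof (cases "a = Suc b")
    case True
    then show ?thesis using Suc.prems by (simp add: prices_of_sums_def)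
  next
    case False
    then have "a \<le> b" using Suc.prems by simp
    then show ?thesis using Suc by (simp add: prices_of_sums_def)
  qed
qed

definition Fv :: "int \<Rightarrow> int \<Rightarrow> real" where
  "Fv l w = real_of_int w * (real_of_int w + 1) * (3 * real_of_int l + 2 - 2 * real_of_int w)
            / (6 * (real_of_int l + 1)^2)"

definition hc :: "customer \<Rightarrow> (nat \<Rightarrow> real) \<Rightarrow> real" where
  "hc c p = (if real_of_int (cweight c) \<ge> price_of p c then max (price_of p c) 0 else 0)"

lemma profit_cons: "profit_coup (c # E) p = hc c p + profit_coup E p"
  by (simp add: profit_coup_def hc_def)

lemma finite_lr: "1 \<le> l \<Longrightarrow> finite (set_pmf (line_random n l))"
  unfolding line_random_def partial_sum_dist_def
  by (auto simp: set_Pi_pmf intro!: finite_PiE_dflt)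

lemma exp_customer:
  assumes "1 \<le> cstart c" "cstart c \<le> cend c" "cend c \<le> n" "1 \<le> cweight c" "cweight c \<le> l"
  shows "measure_pmf.expectation (line_random n l) (hc c) = Fv l (cweight c)"
proof -
  define a where "a = cstart c"
  define b where "b = cend c"
  define w where "w = cweight c"
  define U where "U = pmf_of_set {0..l}"
  have hs: "hc c (prices_of_sums n s) = Tf w (s b - s (a - 1))" for s
    using telescope[of a b n s] assms
    unfolding hc_def price_of_def Tf_def a_def b_def w_def by simp
  have "measure_pmf.expectation (line_random n l) (hc c)
      = measure_pmf.expectation (partial_sum_dist n l) (\<lambda>s. (\<lambda>(u,v). Tf w (v - u)) (s (a - 1), s b))"
    unfolding line_random_def by (simp add: hs)
  also have "\<dots> = measure_pmf.expectation (map_pmf (\<lambda>s. (s (a - 1), s b)) (partial_sum_dist n l)) (\<lambda>(u,v). Tf w (v - u))"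
    by simp
  also have "map_pmf (\<lambda>s. (s (a - 1), s b)) (partial_sum_dist n l) = pair_pmf U U"
    unfolding partial_sum_dist_def U_def
    using assms unfolding a_def b_def by (intro pair_dist) auto
  also have "pair_pmf U U = pmf_of_set ({0..l} \<times> {0..l})"
    unfolding U_def using assms by (intro pair_uniform) auto
  also have "measure_pmf.expectation (pmf_of_set ({0..l} \<times> {0..l})) (\<lambda>(u,v). Tf w (v - u))
     = (\<Sum>x\<in>{0..l}. \<Sum>y\<in>{0..l}. Tf w (y - x)) / (real_of_int l + 1)^2"
    using assms by (simp add: integral_pmf_of_set card_cartesian_product sum.cartesian_product power2_eq_square)
  also have "\<dots> = Fv l w"
  proof -
    obtain m where m: "l = int m" using assms by (metis nonneg_int_cases order_trans zero_le_one)
    have ds: "6 * (\<Sum>x\<in>{0..int m}. \<Sum>y\<in>{0..int m}. Tf w (y - x)) =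
     real_of_int w * (real_of_int w + 1) * (3 * real m + 2 - 2 * real_of_int w)"
    proof -
      have w1: "1 \<le> w" "w \<le> int m" using assms m by (simp_all add: w_def)
      show ?thesis
      proof (cases "int m \<le> w")
        case True
        then have "w = int m" using w1 by simp
        then have hw: "real_of_int w = real m" by simp
        show ?thesis using double_sum[of w m] w1 True by (simp add: hw field_simps)
      next
        case False
        then show ?thesis using double_sum[of w m] w1 by simp
      qed
    qed
    show ?thesis unfolding Fv_def m using ds by (simp add: field_simps)
  qed
  finally show ?thesis unfolding w_def .
qed

lemma exp_list:
  assumes "\<forall>c\<in>set E. 1 \<le> cstart c \<and> cstart c \<le> cend c \<and> cend c \<le> n \<and> 1 \<le> cweight c \<and> cweight c \<le> l"
  shows "measure_pmf.expectation (line_random n l) (profit_coup E) = (\<Sum>c\<leftarrow>E. Fv l (cweight c))"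
  using assms
proof (induction E)
  case Nil
  then show ?case by (simp add: profit_coup_def)
next
  case (Cons c E)
  have l: "1 \<le> l" using Cons.prems by auto
  have "measure_pmf.expectation (line_random n l) (profit_coup (c # E))
      = measure_pmf.expectation (line_random n l) (hc c) + measure_pmf.expectation (line_random n l) (profit_coup E)"
    unfolding profit_cons
    by (rule Bochner_Integration.integral_add; rule integrable_measure_pmf_finite[OF finite_lr[OF l]])
  then show ?case using Cons exp_customer[of c n l] by simp
qed


lemma g_core:
  fixes S W L :: real
  assumes "1 \<le> S" "S \<le> W" "W \<le> L"
  shows "S / L \<le> 1/2 \<Longrightarrow> 2 * (L+1)^2 * S \<le> L * ((W+1)*(3*L+2-2*W))"
    and "\<not> S / L \<le> 1/2 \<Longrightarrow> (L+1)^2 \<le> (W+1)*(3*L+2-2*W)"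
proof -
  have L0: "L > 0" using assms by simp
  have e1: "(W+1)*(3*L+2-2*W) - (L+1)*(L+2) = (L-W)*(2*W-L)" by (simp add: algebra_simps)
  have e2: "(W+1)*(3*L+2-2*W) - (S+1)*(3*L+2-2*S) = (W-S)*(3*L-2*W-2*S)" by (simp add: algebra_simps)
  {
    assume "S / L \<le> 1/2"
    then have h: "2 * S \<le> L" using L0 by (simp add: field_simps)
    show "2 * (L+1)^2 * S \<le> L * ((W+1)*(3*L+2-2*W))"
    proof (cases "2 * W \<ge> L")
      case True
      have "0 \<le> (L-W)*(2*W-L)" using True assms by simp
      then have g: "(L+1)*(L+2) \<le> (W+1)*(3*L+2-2*W)" using e1 by linarith
      have "2 * (L+1)^2 * S = (L+1) * ((2*S) * (L+1))" by (simp add: power2_eq_square algebra_simps)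
      also have "\<dots> \<le> (L+1) * (L * (L+2))"
      proof (rule mult_left_mono)
        have a1: "(2*S) * (L+1) \<le> L * (L+1)" using h L0 by (intro mult_right_mono) auto
        have a2: "L * (L+1) \<le> L * (L+2)" using L0 by (intro mult_left_mono) auto
        show "(2*S) * (L+1) \<le> L * (L+2)" using a1 a2 by linarith
      qed (use L0 in auto)
      also have "\<dots> = L * ((L+1)*(L+2))" by (simp add: algebra_simps)
      also have "\<dots> \<le> L * ((W+1)*(3*L+2-2*W))" using g L0 by (intro mult_left_mono) auto
      finally show ?thesis .
    next
      case False
      have "0 \<le> (W-S)*(3*L-2*W-2*S)" using False assms by simp
      then have g: "(S+1)*(3*L+2-2*S) \<le> (W+1)*(3*L+2-2*W)" using e2 by linarith
      have g2: "(S+1)*(2*L+2) \<le> (S+1)*(3*L+2-2*S)" using h assms by (intro mult_left_mono) auto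
      have "2 * (L+1)^2 * S = 2*(L+1) * ((L+1) * S)" by (simp add: power2_eq_square algebra_simps)
      also have "\<dots> \<le> 2*(L+1) * (L * (S+1))"
        using assms L0 by (intro mult_left_mono) (simp_all add: algebra_simps)
      also have "\<dots> = L * ((S+1)*(2*L+2))" by (simp add: algebra_simps)
      also have "\<dots> \<le> L * ((W+1)*(3*L+2-2*W))" using g g2 L0 by (intro mult_left_mono) auto
      finally show ?thesis .
    qed
  }
  {
    assume "\<not> S / L \<le> 1/2"
    then have h: "2 * S > L" using L0 by (simp add: field_simps)
    have "0 \<le> (L-W)*(2*W-L)" using h assms by simp
    then have g: "(L+1)*(L+2) \<le> (W+1)*(3*L+2-2*W)" using e1 by linarith
    have "(L+1)^2 \<le> (L+1)*(L+2)" using L0 by (simp add: power2_eq_square)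
    then show "(L+1)^2 \<le> (W+1)*(3*L+2-2*W)" using g by linarith
  }
qed

lemma key_ineq:
  fixes s w l :: int
  assumes "1 \<le> s" "s \<le> w" "w \<le> l"
  shows "real_of_int w \<le> (if real_of_int s / real_of_int l \<le> 1/2 then 3 / (real_of_int s / real_of_int l) else 6) * Fv l w"
proof -
  define S where "S = real_of_int s"
  define W where "W = real_of_int w"
  define L where "L = real_of_int l"
  define K where "K = (if S / L \<le> 1/2 then 3 / (S / L) else 6)"
  define g where "g = (W+1)*(3*L+2-2*W)"
  have a: "1 \<le> S" "S \<le> W" "W \<le> L" using assms by (simp_all add: S_def W_def L_def)
  have L0: "L > 0" using a by simp
  have Kg: "6 * (L+1)^2 \<le> K * g"
  proof (cases "S / L \<le> 1/2")
    case True
    have c: "2 * (L+1)^2 * S \<le> L * g" using g_core(1)[OF a True] by (simp add: g_def)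
    have "K * g = 3 * (L * g) / S" using True a by (simp add: K_def field_simps)
    also have "\<dots> \<ge> 3 * (2 * (L+1)^2 * S) / S" using c a by (intro divide_right_mono) (auto simp: mult_ac)
    finally show ?thesis using a by (simp add: field_simps)
  next
    case False
    then show ?thesis using g_core(2)[OF a False] by (simp add: K_def g_def)
  qed
  have Fv: "Fv l w = W * g / (6 * (L+1)^2)" by (simp add: Fv_def W_def L_def g_def)
  have pos: "6 * (L+1)^2 > 0" using L0 by simp
  have "W = W * (6 * (L+1)^2) / (6 * (L+1)^2)" using pos by simp
  also have "\<dots> \<le> W * (K * g) / (6 * (L+1)^2)"
    using Kg a pos by (intro divide_right_mono mult_left_mono) auto
  also have "\<dots> = K * Fv l w" unfolding Fv by simp
  finally show ?thesis by (simp only: K_def S_def L_def W_def)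
qed


theorem theorem1:
  fixes n :: nat and E :: "customer list" and s l :: int
  assumes "reduced_instance n E"
    and "has_valuation E s l"
    and "s \<ge> 1"
  defines "r \<equiv> real_of_int s / real_of_int l"
  shows "opt_coup n E \<le> (if r \<le> 1/2 then 3 / r else 6) * expected_profit_line_random n E l"
proof -
  define K where "K = (if r \<le> 1/2 then 3 / r else 6)"
  have valid: "\<forall>c\<in>set E. 1 \<le> cstart c \<and> cstart c \<le> cend c \<and> cend c \<le> n \<and> 1 \<le> cweight c \<and> cweight c \<le> l"
    using assms(1,2,3) unfolding reduced_instance_def has_valuation_def by fastforce
  have sw: "\<forall>c\<in>set E. s \<le> cweight c"
    using assms(2) unfolding has_valuation_def by blast
  have opt: "opt_coup n E \<le> (\<Sum>c\<leftarrow>E. real_of_int (cweight c))"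
    unfolding opt_coup_def
  proof (rule cSUP_least)
    show "{p :: nat \<Rightarrow> real. \<forall>i. i \<notin> {1..n} \<longrightarrow> p i = 0} \<noteq> {}"
    proof -
      have "(\<lambda>_. 0 :: real) \<in> {p :: nat \<Rightarrow> real. \<forall>i. i \<notin> {1..n} \<longrightarrow> p i = 0}" by simp
      then show ?thesis by blast
    qed
  next
    fix p :: "nat \<Rightarrow> real"
    show "profit_coup E p \<le> (\<Sum>c\<leftarrow>E. real_of_int (cweight c))"
      unfolding profit_coup_def
    proof (rule sum_list_mono)
      fix c assume "c \<in> set E"
      then have "1 \<le> cweight c" using valid by blast
      then show "(if real_of_int (cweight c) \<ge> price_of p c then max (price_of p c) 0 else 0) \<le> real_of_int (cweight c)"
        by auto
    qed
  qed
  have ex: "expected_profit_line_random n E l = (\<Sum>c\<leftarrow>E. Fv l (cweight c))"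
    unfolding expected_profit_line_random_def using exp_list[OF valid] .
  have "(\<Sum>c\<leftarrow>E. real_of_int (cweight c)) \<le> (\<Sum>c\<leftarrow>E. K * Fv l (cweight c))"
  proof (rule sum_list_mono)
    fix c assume c: "c \<in> set E"
    show "real_of_int (cweight c) \<le> K * Fv l (cweight c)"
      unfolding K_def r_def using key_ineq[of s "cweight c" l] c valid sw assms(3) by blast
  qed
  also have "\<dots> = K * (\<Sum>c\<leftarrow>E. Fv l (cweight c))" by (rule sum_list_const_mult)
  finally show ?thesis using opt ex unfolding K_def by simp
qed

end
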